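(* Consider a neutral evolutionary model on $N$ sites given by a replacement rule $p$ satisfying the fixation assumption described in the context, with replacement probabilities $e_{ij}$, death rates $d_i$ and site-specific fixation probabilities $\rho_i$. Then for each $i=1,\ldots,N$, $$d_i\rho_i=\sum_{j=1}^N e_{ij}\rho_j.$$
   Context: There are $N$ sites $1,\ldots,N$, each always occupied by one individual of type M (mutant) or R (resident); a state is $\mathbf{s}\in\{\mathrm{M},\mathrm{R}\}^N$. A replacement event is a pair $(R,\alpha)$ with $R\subseteq\{1,\ldots,N\}$ and $\alpha:R\to\{1,\ldots,N\}$. A replacement rule is a probability distribution $p(R,\alpha)$ on replacement events, independent of the state. The evolutionary Markov chain: at each time-step an event $(R,\alpha)$ is drawn with probability $p(R,\alpha)$ and the new state is $s_i'=s_i$ if $i\notin R$, $s_i'=s_{\alpha(i)}$ if $i\in R$. Fixation assumption: there exist a site $i$ and a finite sequence of replacement events, each of positive probability, such that if these events occur consecutively (from any initial state) every site ends up carrying the type initially at site $i$. Define $e_{ij}=\sum_{(R,\alpha):\, j\in R,\ \alpha(j)=i}p(R,\alpha)$ and $d_i=\sum_j e_{ji}=\sum_{(R,\alpha):\, i\in R}p(R,\alpha)$. The site-specific fixation probability $\rho_i$ is the probability that the chain started from the state with M at site $i$ and R elsewhere is eventually absorbed in $(\mathrm{M},\ldots,\mathrm{M})$. *)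

theory Defs
  imports "HOL-Probability.Probability"
begin

text \<open>Sites are the elements of a finite type 'site (N = CARD('site)).
  A state assigns to each site True (type M, mutant) or False (type R, resident).
  A replacement event is a pair (R, alpha); only the restriction of alpha to R matters.
  A replacement rule is a pmf on replacement events.\<close>

type_synonym 'site state = "'site \<Rightarrow> bool"
type_synonym 'site event = "'site set \<times> ('site \<Rightarrow> 'site)"

definition apply_event :: "'site event \<Rightarrow> 'site state \<Rightarrow> 'site state" where
  "apply_event evt s = (\<lambda>i. if i \<in> fst evt then s (snd evt i) else s i)"

definition run_events :: "'site event list \<Rightarrow> 'site state \<Rightarrow> 'site state" where
  "run_events es s = fold apply_event es s"

definition fixation_assumption :: "'site event pmf \<Rightarrow> bool" where
  "fixation_assumption p \<longleftrightarrow>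
     (\<exists>i es. (\<forall>evt\<in>set es. pmf p evt > 0) \<and> (\<forall>s j. run_events es s j = s i))"

definition repl_prob :: "'site event pmf \<Rightarrow> 'site \<Rightarrow> 'site \<Rightarrow> real" where
  "repl_prob p i j = measure_pmf.prob p {evt. j \<in> fst evt \<and> snd evt j = i}"

definition death_rate :: "'site event pmf \<Rightarrow> 'site \<Rightarrow> real" where
  "death_rate p i = measure_pmf.prob p {evt. i \<in> fst evt}"

text \<open>The evolutionary Markov chain is driven by an i.i.d. sequence of events drawn
  from p; the state at time n is obtained by applying the first n events.\<close>
definition fix_prob :: "'site event pmf \<Rightarrow> 'site \<Rightarrow> real" where
  "fix_prob p i = measure (stream_space (measure_pmf p))
     {\<omega>. \<exists>n. run_events (stake n \<omega>) (\<lambda>j. j = i) = (\<lambda>_. True)}"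

end

theory Submission
  imports Defs
begin


definition fe :: "'site event \<Rightarrow> 'site \<Rightarrow> 'site" where
  "fe e i = (if i \<in> fst e then snd e i else i)"
definition G :: "'site event list \<Rightarrow> 'site \<Rightarrow> 'site" where
  "G es = fold (\<lambda>e g. g \<circ> fe e) es id"

lemma fold_G: "fold (\<lambda>e g. g \<circ> fe e) es (g :: 'site \<Rightarrow> 'site) = g \<circ> G es"
proof (induction es arbitrary: g)
  case Nil then show ?case by (simp add: G_def)
next
  case (Cons e es)
  have "G (e#es) = fold (\<lambda>e g. g \<circ> fe e) es (fe e)" by (simp add: G_def)
  also have "\<dots> = fe e \<circ> G es" by (rule Cons)
  finally have *: "G (e#es) = fe e \<circ> G es" .
  have "fold (\<lambda>e g. g \<circ> fe e) (e#es) g = fold (\<lambda>e g. g \<circ> fe e) es (g \<circ> fe e)" by simp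
  also have "\<dots> = (g \<circ> fe e) \<circ> G es" by (rule Cons)
  also have "\<dots> = g \<circ> G (e#es)" by (simp only: * comp_assoc)
  finally show ?case .
qed

lemma G_Cons: "G (e#es) = fe e \<circ> G es"
proof -
  have "G (e#es) = fold (\<lambda>e g. g \<circ> fe e) es (fe e)" by (simp add: G_def)
  also have "\<dots> = fe e \<circ> G es" by (rule fold_G)
  finally show ?thesis .
qed

lemma G_append: "G (xs @ ys) = G xs \<circ> G ys"
proof -
  have "G (xs@ys) = fold (\<lambda>e g. g \<circ> fe e) ys (G xs)" by (simp add: G_def)
  also have "\<dots> = G xs \<circ> G ys" by (rule fold_G)
  finally show ?thesis .
qed

lemma run_G: "run_events es s = s \<circ> G es"
proof (induction es arbitrary: s)
  case Nil then show ?case by (simp add: run_events_def G_def)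
next
  case (Cons e es)
  have ae: "apply_event e s = s \<circ> fe e" by (auto simp: apply_event_def fe_def)
  have "run_events (e#es) s = run_events es (apply_event e s)" by (simp add: run_events_def)
  also have "\<dots> = apply_event e s \<circ> G es" by (rule Cons)
  also have "\<dots> = s \<circ> G (e#es)" by (simp only: ae G_Cons comp_assoc)
  finally show ?case .
qed

lemma G_mono:
  assumes "n \<le> m" shows "G (stake m \<omega>) x \<in> range (G (stake n \<omega>))"
proof -
  obtain k where "m = n + k" using assms le_Suc_ex by blast
  then have "stake m \<omega> = stake n \<omega> @ stake k (sdrop n \<omega>)" by (simp only: stake_add)
  then have "G (stake m \<omega>) x = G (stake n \<omega>) (G (stake k (sdrop n \<omega>)) x)"
    by (simp only: G_append comp_apply)
  then show ?thesis by (rule ssubst) (rule rangeI)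
qed

lemma G_const_mono:
  assumes "\<forall>x. G (stake n \<omega>) x = c" "n \<le> m" shows "G (stake m \<omega>) x = c"
  using G_mono[OF assms(2), of \<omega> x] assms(1) by auto

lemma meas_stake:
  "{\<omega>. Q (stake n \<omega>)} \<in> sets (stream_space (measure_pmf (p :: ('site::finite) event pmf)))"
proof -
  have eq: "sets (stream_space (measure_pmf p)) = sets (stream_space (count_space UNIV))"
    by (rule sets_stream_space_cong) simp
  have "(\<lambda>\<omega>. Q (stake n \<omega>)) \<in> measurable (stream_space (count_space UNIV)) (count_space UNIV)"
    by (rule measurable_compose[OF measurable_stake]) simp
  then have "{\<omega>\<in>space (stream_space (count_space UNIV)). Q (stake n \<omega>)} \<in> sets (stream_space (count_space UNIV))"
    by (simp add: pred_def measurable_count_space_eq2)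
  then show ?thesis using eq by (simp add: space_stream_space)
qed



context
  fixes p :: "('site::finite) event pmf"
begin

abbreviation "SS \<equiv> stream_space (measure_pmf p)"

lemma space_SS[simp]: "space SS = UNIV"
  by (simp add: space_stream_space)

lemma S_prob: "prob_space SS" by (rule prob_space.prob_space_stream_space[OF prob_space_measure_pmf])

lemma sdrop_meas: "B \<in> sets SS \<Longrightarrow> {\<omega>. sdrop n \<omega> \<in> B} \<in> sets SS"
  using measurable_sets[OF measurable_sdrop[of n "measure_pmf p"], of B] by (simp add: vimage_def)

lemma emeasure_sdrop: "B \<in> sets SS \<Longrightarrow> emeasure SS {\<omega>. sdrop n \<omega> \<in> B} = emeasure SS B"
proof (induction n)
  case 0 then show ?case by simp
next
  case (Suc n)
  have "emeasure SS {\<omega>. sdrop (Suc n) \<omega> \<in> B} =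
     (\<integral>\<^sup>+t. emeasure SS {x\<in>space SS. t ## x \<in> {\<omega>. sdrop (Suc n) \<omega> \<in> B}} \<partial>measure_pmf p)"
    by (rule prob_space.emeasure_stream_space[OF prob_space_measure_pmf]) (rule sdrop_meas[OF Suc.prems])
  also have "\<dots> = (\<integral>\<^sup>+t. emeasure SS B \<partial>measure_pmf p)"
    using Suc by simp
  also have "\<dots> = emeasure SS B" by (simp add: measure_pmf.emeasure_space_1)
  finally show ?case .
qed

lemma emeasure_prefix:
  "B \<in> sets SS \<Longrightarrow> emeasure SS {\<omega>. stake (length xs) \<omega> = xs \<and> sdrop (length xs) \<omega> \<in> B}
     = ennreal (prod_list (map (pmf p) xs)) * emeasure SS B"
proof (induction xs)
  case Nil then show ?case by simp
next
  case (Cons y ys)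
  let ?A = "{\<omega>. stake (length ys) \<omega> = ys \<and> sdrop (length ys) \<omega> \<in> B}"
  have mA: "?A \<in> sets SS"
    using meas_stake[of "\<lambda>zs. zs = ys" "length ys" p] sdrop_meas[OF Cons.prems, of "length ys"]
    by (simp add: Collect_conj_eq)
  have mA2: "{\<omega>. stake (length (y#ys)) \<omega> = y#ys \<and> sdrop (length (y#ys)) \<omega> \<in> B} \<in> sets SS"
    using meas_stake[of "\<lambda>zs. zs = y#ys" "length (y#ys)" p] sdrop_meas[OF Cons.prems, of "length (y#ys)"]
    by (simp only: Collect_conj_eq) (rule sets.Int)
  have "emeasure SS {\<omega>. stake (length (y#ys)) \<omega> = y#ys \<and> sdrop (length (y#ys)) \<omega> \<in> B} =
     (\<integral>\<^sup>+t. emeasure SS {x\<in>space SS. t ## x \<in> {\<omega>. stake (length (y#ys)) \<omega> = y#ys \<and> sdrop (length (y#ys)) \<omega> \<in> B}} \<partial>measure_pmf p)"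
    by (rule prob_space.emeasure_stream_space[OF prob_space_measure_pmf]) (rule mA2)
  also have "\<dots> = (\<integral>\<^sup>+t. emeasure SS ?A * indicator {y} t \<partial>measure_pmf p)"
    by (rule nn_integral_cong) (auto split: split_indicator)
  also have "\<dots> = emeasure SS ?A * emeasure (measure_pmf p) {y}"
    by (rule nn_integral_cmult_indicator) simp
  also have "\<dots> = ennreal (prod_list (map (pmf p) (y#ys))) * emeasure SS B"
    using Cons by (simp add: emeasure_pmf_single ennreal_mult' prod_list_nonneg mult_ac)
  finally show ?case .
qed


lemma measure_sdrop: "B \<in> sets SS \<Longrightarrow> measure SS {\<omega>. sdrop n \<omega> \<in> B} = measure SS B"
  by (simp add: measure_def emeasure_sdrop)

lemma measure_prefix:
  "B \<in> sets SS \<Longrightarrow> measure SS {\<omega>. stake (length xs) \<omega> = xs \<and> sdrop (length xs) \<omega> \<in> B}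
     = prod_list (map (pmf p) xs) * measure SS B"
proof -
  have "0 \<le> prod_list (map (pmf p) xs)" by (induction xs) auto
  then show "B \<in> sets SS \<Longrightarrow> ?thesis" by (simp add: measure_def emeasure_prefix enn2real_mult)
qed

definition "Fix s = {\<omega>. \<exists>n. run_events (stake n \<omega>) s = (\<lambda>_. True)}"
definition "Coal = {\<omega>::'site event stream. \<exists>n c. \<forall>x. G (stake n \<omega>) x = c}"

lemma Fix_meas: "Fix s \<in> sets SS"
proof -
  have "Fix s = (\<Union>n. {\<omega>. run_events (stake n \<omega>) s = (\<lambda>_. True)})" by (auto simp: Fix_def)
  also have "\<dots> \<in> sets SS"
    using meas_stake[of "\<lambda>xs. run_events xs s = (\<lambda>_. True)" _ p] by (intro sets.countable_UN') auto
  finally show ?thesis .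
qed

lemma Coal_meas: "Coal \<in> sets SS"
proof -
  have "Coal = (\<Union>n. {\<omega>. (\<lambda>xs. \<exists>c. \<forall>x. G xs x = c) (stake n \<omega>)})" by (auto simp: Coal_def)
  also have "\<dots> \<in> sets SS"
    using meas_stake[of "\<lambda>xs. \<exists>c. \<forall>x. G xs x = c" _ p] by (intro sets.countable_UN') auto
  finally show ?thesis .
qed

lemma coal_ae:
  assumes "fixation_assumption p"
  shows "measure SS (UNIV - Coal) = 0"
proof -
  interpret S: prob_space SS by (rule S_prob)
  obtain i0 es where pos: "\<forall>e\<in>set es. pmf p e > 0" and run: "\<forall>s j. run_events es s j = s i0"
  proof -
    from assms obtain i es where "(\<forall>evt\<in>set es. pmf p evt > 0) \<and> (\<forall>s j. run_events es s j = s i)"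
      unfolding fixation_assumption_def by (elim exE) 
    then show ?thesis using that by (elim conjE)
  qed
  have Gc: "G es x = i0" for x
  proof -
    have "run_events es (\<lambda>k. k = G es x) x = (i0 = G es x)" by (simp only: run)
    then show ?thesis by (simp add: run_G)
  qed
  define C where "C = UNIV - Coal"
  define L where "L = length es"
  define q where "q = prod_list (map (pmf p) es)"
  have qpos: "q > 0" unfolding q_def using pos by (induction es) (auto intro: mult_pos_pos)
  have Cm: "C \<in> sets SS" unfolding C_def using sets.compl_sets[OF Coal_meas] by simp
  define A1 where "A1 = {\<omega>. sdrop L \<omega> \<in> C}"
  define A2 where "A2 = {\<omega>. stake L \<omega> = es \<and> sdrop L \<omega> \<in> C}"
  have A1m: "A1 \<in> sets SS" unfolding A1_def by (rule sdrop_meas[OF Cm])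
  have A2m: "A2 \<in> sets SS" unfolding A2_def
    using meas_stake[of "\<lambda>zs. zs = es" L p] sdrop_meas[OF Cm, of L]
    by (simp only: Collect_conj_eq) (rule sets.Int)
  have notC: "\<omega> \<notin> C" if "\<forall>x. G (stake n \<omega>) x = c" for \<omega> n c
  proof -
    have "\<omega> \<in> Coal" unfolding Coal_def using that by blast
    then show ?thesis unfolding C_def by blast
  qed
  have sub: "C \<subseteq> A1 - A2"
  proof
    fix \<omega> assume w: "\<omega> \<in> C"
    have "stake L \<omega> \<noteq> es"
    proof
      assume "stake L \<omega> = es"
      then have "\<forall>x. G (stake L \<omega>) x = i0" using Gc by simp
      then show False using w notC by blast
    qed
    moreover have "sdrop L \<omega> \<in> C"
    proof (rule ccontr)
      assume "sdrop L \<omega> \<notin> C"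
      then have "sdrop L \<omega> \<in> Coal" unfolding C_def by blast
      then obtain m c where hm: "\<forall>x. G (stake m (sdrop L \<omega>)) x = c" unfolding Coal_def by blast
      have st: "stake (L+m) \<omega> = stake L \<omega> @ stake m (sdrop L \<omega>)" by (simp only: stake_add)
      have "\<forall>x. G (stake (L + m) \<omega>) x = G (stake L \<omega>) c"
        using hm by (simp only: st G_append comp_apply) simp
      then show False using w notC by blast
    qed
    ultimately show "\<omega> \<in> A1 - A2" unfolding A1_def A2_def by blast
  qed
  have e1: "measure SS A1 = measure SS C" unfolding A1_def by (rule measure_sdrop[OF Cm])
  have e2: "measure SS A2 = q * measure SS C" unfolding A2_def L_def q_def by (rule measure_prefix[OF Cm])
  have "measure SS C \<le> measure SS (A1 - A2)"
    by (rule S.finite_measure_mono[OF sub sets.Diff[OF A1m A2m]])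
  also have "\<dots> = measure SS A1 - measure SS A2"
    by (rule S.finite_measure_Diff[OF A1m A2m]) (unfold A1_def A2_def, blast)
  also have "\<dots> = measure SS C - q * measure SS C"
    by (simp only: e1 e2)
  finally have "q * measure SS C \<le> 0" by simp
  then have "measure SS C \<le> 0" using qpos by (simp add: mult_le_0_iff)
  then show ?thesis unfolding C_def by (simp add: order_antisym)
qed

lemma run_True: "run_events xs s = (\<lambda>_. True) \<longleftrightarrow> (\<forall>x. s (G xs x))"
  by (auto simp: run_G fun_eq_iff)

lemma linear:
  assumes "fixation_assumption p"
  shows "measure SS (Fix s) = (\<Sum>j\<in>{j. s j}. measure SS (Fix (\<lambda>k. k = j)))"
proof -
  interpret S: prob_space SS by (rule S_prob)
  have eq: "Fix s \<inter> Coal = (\<Union>j\<in>{j. s j}. Fix (\<lambda>k. k = j))"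
  proof (intro equalityI subsetI)
    fix \<omega> assume "\<omega> \<in> Fix s \<inter> Coal"
    then obtain n1 n2 c where h1: "\<forall>x. s (G (stake n1 \<omega>) x)" and h2: "\<forall>x. G (stake n2 \<omega>) x = c"
      by (auto simp: Fix_def Coal_def run_True)
    have c: "\<forall>x. G (stake (max n1 n2) \<omega>) x = c" using G_const_mono[OF h2] by auto
    obtain y where "G (stake (max n1 n2) \<omega>) undefined = G (stake n1 \<omega>) y"
      using G_mono[of n1 "max n1 n2" \<omega> undefined] by auto
    then have "s c" using c h1 by simp
    moreover have "\<omega> \<in> Fix (\<lambda>k. k = c)" using c by (auto simp: Fix_def run_True)
    ultimately show "\<omega> \<in> (\<Union>j\<in>{j. s j}. Fix (\<lambda>k. k = j))" by auto
  next
    fix \<omega> assume "\<omega> \<in> (\<Union>j\<in>{j. s j}. Fix (\<lambda>k. k = j))"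
    then obtain j n where sj: "s j" and hj: "\<forall>x. G (stake n \<omega>) x = j"
      by (auto simp: Fix_def run_True)
    have "\<forall>x. s (G (stake n \<omega>) x)" using sj hj by simp
    then have "\<omega> \<in> Fix s" unfolding Fix_def run_True by blast
    moreover have "\<omega> \<in> Coal" unfolding Coal_def using hj by blast
    ultimately show "\<omega> \<in> Fix s \<inter> Coal" by blast
  qed
  have disj: "disjoint_family_on (\<lambda>j. Fix (\<lambda>k. k = j)) {j. s j}"
  proof (unfold disjoint_family_on_def, intro ballI impI)
    fix a b assume "a \<noteq> b"
    show "Fix (\<lambda>k. k = a) \<inter> Fix (\<lambda>k. k = b) = {}"
    proof (rule ccontr)
      assume "Fix (\<lambda>k. k = a) \<inter> Fix (\<lambda>k. k = b) \<noteq> {}"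
      then obtain \<omega> n1 n2 where h1: "\<forall>x. G (stake n1 \<omega>) x = a" and h2: "\<forall>x. G (stake n2 \<omega>) x = b"
        by (auto simp: Fix_def run_True)
      have "G (stake (max n1 n2) \<omega>) undefined = a" using G_const_mono[OF h1] by auto
      moreover have "G (stake (max n1 n2) \<omega>) undefined = b" using G_const_mono[OF h2] by auto
      ultimately show False using \<open>a \<noteq> b\<close> by simp
    qed
  qed
  have m1: "measure SS (Fix s \<inter> Coal) = (\<Sum>j\<in>{j. s j}. measure SS (Fix (\<lambda>k. k = j)))"
    unfolding eq by (rule S.finite_measure_finite_Union[OF _ _ disj]) (simp, use Fix_meas in blast)
  have cm: "UNIV - Coal \<in> sets SS" using sets.compl_sets[OF Coal_meas] by simp
  have im: "Fix s \<inter> Coal \<in> sets SS" by (intro sets.Int Fix_meas Coal_meas)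
  have "measure SS (Fix s) \<le> measure SS ((Fix s \<inter> Coal) \<union> (UNIV - Coal))"
    by (rule S.finite_measure_mono[OF _ sets.Un[OF im cm]]) blast
  also have "\<dots> \<le> measure SS (Fix s \<inter> Coal) + measure SS (UNIV - Coal)"
    by (rule measure_subadditive[OF im cm]) (simp_all add: S.emeasure_eq_measure)
  also have "\<dots> = measure SS (Fix s \<inter> Coal)" using coal_ae[OF assms] by simp
  finally have "measure SS (Fix s) \<le> measure SS (Fix s \<inter> Coal)" .
  moreover have "measure SS (Fix s \<inter> Coal) \<le> measure SS (Fix s)"
    by (rule S.finite_measure_mono[OF _ Fix_meas]) blast
  ultimately show ?thesis using m1 by linarith
qed

lemma one_step:
  "measure SS (Fix s) = (\<Sum>e\<in>UNIV. pmf p e * measure SS (Fix (apply_event e s)))"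
proof -
  interpret S: prob_space SS by (rule S_prob)
  have seq: "{x\<in>space SS. t ## x \<in> Fix s} = Fix (apply_event t s)" for t
  proof (intro equalityI subsetI)
    fix x assume "x \<in> {x\<in>space SS. t ## x \<in> Fix s}"
    then obtain n where n: "run_events (stake n (t ## x)) s = (\<lambda>_. True)" by (auto simp: Fix_def)
    show "x \<in> Fix (apply_event t s)"
    proof (cases n)
      case 0
      then have "apply_event t s = (\<lambda>_. True)" using n by (auto simp: run_events_def apply_event_def fun_eq_iff)
      then show ?thesis unfolding Fix_def by (intro CollectI exI[of _ 0]) (simp add: run_events_def)
    next
      case (Suc m)
      then show ?thesis using n unfolding Fix_def by (intro CollectI exI[of _ m]) (simp add: run_events_def)
    qed
  next
    fix x assume "x \<in> Fix (apply_event t s)"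
    then obtain m where "run_events (stake m x) (apply_event t s) = (\<lambda>_. True)" by (auto simp: Fix_def)
    then have "run_events (stake (Suc m) (t ## x)) s = (\<lambda>_. True)" by (simp add: run_events_def)
    then have "t ## x \<in> Fix s" unfolding Fix_def by blast
    then show "x \<in> {x\<in>space SS. t ## x \<in> Fix s}" by simp
  qed
  have "emeasure SS (Fix s) = (\<integral>\<^sup>+t. emeasure SS {x\<in>space SS. t ## x \<in> Fix s} \<partial>measure_pmf p)"
    by (rule prob_space.emeasure_stream_space[OF prob_space_measure_pmf]) (rule Fix_meas)
  also have "\<dots> = (\<integral>\<^sup>+t. ennreal (measure SS (Fix (apply_event t s))) \<partial>measure_pmf p)"
  proof -
    have seq': "{x. t ## x \<in> Fix s} = Fix (apply_event t s)" for t using seq[of t] by simp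
    show ?thesis by (simp add: seq' S.emeasure_eq_measure)
  qed
  also have "\<dots> = (\<Sum>t\<in>UNIV. ennreal (measure SS (Fix (apply_event t s))) * pmf p t)"
    by (rule nn_integral_measure_pmf_support) auto
  also have "\<dots> = ennreal (\<Sum>t\<in>UNIV. pmf p t * measure SS (Fix (apply_event t s)))"
    by (subst sum_ennreal[symmetric]) (auto simp: ennreal_mult'[symmetric] mult.commute)
  finally show ?thesis by (simp add: S.emeasure_eq_measure sum_nonneg)
qed


lemma sum_Collect_If: "(\<Sum>j\<in>{j. Q j}. f j) = (\<Sum>j\<in>(UNIV::'a::finite set). if Q j then f j else (0::real))"
  using sum.inter_filter[of "UNIV::'a set" f Q] by simp

lemma main_ctx:
  assumes fa: "fixation_assumption p"
  shows "death_rate p i * fix_prob p i = (\<Sum>j\<in>UNIV. repl_prob p i j * fix_prob p j)"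
proof -
  define \<rho> where "\<rho> j = measure SS (Fix (\<lambda>k. k = j))" for j
  have fp: "fix_prob p j = \<rho> j" for j by (simp add: fix_prob_def \<rho>_def Fix_def)
  define P where "P e j \<longleftrightarrow> (if j \<in> fst e then snd e j = i else j = i)" for e j
  have ap: "apply_event e (\<lambda>k. k = i) = P e" for e by (auto simp: apply_event_def P_def fun_eq_iff)
  define r where "r j = (\<Sum>e\<in>UNIV. if j \<in> fst e \<and> snd e j = i then pmf p e else 0)" for j
  define d where "d = (\<Sum>e\<in>UNIV. if i \<in> fst e then pmf p e else 0)"
  have r: "repl_prob p i j = r j" for j
    unfolding repl_prob_def r_def
    by (simp add: measure_measure_pmf_finite sum_Collect_If)
  have d: "death_rate p i = d"
    unfolding death_rate_def d_def
    by (simp add: measure_measure_pmf_finite sum_Collect_If)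
  have one: "(\<Sum>e\<in>UNIV. pmf p e) = 1" by (rule sum_pmf_eq_1) auto
  have inner: "(\<Sum>e\<in>UNIV. if P e j then pmf p e else 0) = r j + (if j = i then 1 - d else 0)" for j
  proof -
    have pw: "(if P e j then pmf p e else 0) = (if j \<in> fst e \<and> snd e j = i then pmf p e else 0)
        + (if j = i then pmf p e - (if i \<in> fst e then pmf p e else 0) else 0)" for e
      by (auto simp: P_def)
    have "(\<Sum>e\<in>UNIV. if P e j then pmf p e else 0) = r j +
        (\<Sum>e\<in>UNIV. if j = i then pmf p e - (if i \<in> fst e then pmf p e else 0) else 0)"
      unfolding pw r_def by (rule sum.distrib)
    also have "(\<Sum>e\<in>UNIV. if j = i then pmf p e - (if i \<in> fst e then pmf p e else 0) else 0)
        = (if j = i then 1 - d else 0)"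
      by (cases "j = i") (simp_all add: sum_subtractf one d_def)
    finally show ?thesis .
  qed
  have "\<rho> i = (\<Sum>e\<in>UNIV. pmf p e * measure SS (Fix (apply_event e (\<lambda>k. k = i))))"
    unfolding \<rho>_def by (rule one_step)
  also have "\<dots> = (\<Sum>e\<in>UNIV. pmf p e * (\<Sum>j\<in>UNIV. if P e j then \<rho> j else 0))"
  proof -
    have step: "measure SS (Fix (P e)) = (\<Sum>j\<in>UNIV. if P e j then \<rho> j else 0)" for e
      using linear[OF fa, of "P e"] unfolding \<rho>_def[symmetric] by (simp only: sum_Collect_If)
    show ?thesis by (simp only: ap step)
  qed
  also have "\<dots> = (\<Sum>e\<in>UNIV. \<Sum>j\<in>UNIV. if P e j then pmf p e * \<rho> j else 0)"
    unfolding sum_distrib_left by (intro sum.cong refl) simp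
  also have "\<dots> = (\<Sum>j\<in>UNIV. \<Sum>e\<in>UNIV. if P e j then pmf p e * \<rho> j else 0)"
    by (rule sum.swap)
  also have "\<dots> = (\<Sum>j\<in>UNIV. \<rho> j * (\<Sum>e\<in>UNIV. if P e j then pmf p e else 0))"
    unfolding sum_distrib_left by (intro sum.cong refl) simp
  also have "\<dots> = (\<Sum>j\<in>UNIV. \<rho> j * r j + (if j = i then \<rho> i * (1 - d) else 0))"
    by (rule sum.cong) (auto simp: inner algebra_simps)
  also have "\<dots> = (\<Sum>j\<in>UNIV. \<rho> j * r j) + \<rho> i * (1 - d)"
    by (simp add: sum.distrib)
  finally have "\<rho> i = (\<Sum>j\<in>UNIV. \<rho> j * r j) + \<rho> i * (1 - d)" .
  then have "d * \<rho> i = (\<Sum>j\<in>UNIV. r j * \<rho> j)" by (simp add: algebra_simps)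
  then show ?thesis by (simp add: fp r d)
qed
end

theorem mainTheorem7:
  fixes p :: "('site::finite) event pmf" and i :: 'site
  assumes "fixation_assumption p"
  shows "death_rate p i * fix_prob p i = (\<Sum>j\<in>UNIV. repl_prob p i j * fix_prob p j)"
  using main_ctx[OF assms] .

end
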